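(* Frankl's conjecture is equivalent to Nagel's conjecture.
   Context: A family $\mathcal{A}$ of sets is union-closed if $A\cup B\in\mathcal{A}$ for all $A,B\in\mathcal{A}$. Frankl's conjecture: for any finite union-closed family of finite sets, other than the family consisting only of the empty set, there exists an element that belongs to at least half of the sets in the family. Nagel's conjecture: let $\mathcal{F}\subset 2^{\{1,2,\dots,n\}}$ be a union-closed family with $\bigcup_{A\in\mathcal{F}}A=\{1,2,\dots,n\}$, where the elements of the ground set are labeled so that $|\{F\in\mathcal{F}:1\in F\}|\ge|\{F\in\mathcal{F}:2\in F\}|\ge\cdots\ge|\{F\in\mathcal{F}:n\in F\}|$; then for every $k\in\{1,2,\dots,n\}$ it holds that $|\{F\in\mathcal{F}:k\in F\}|\ge\frac{1}{2^{k-1}+1}|\mathcal{F}|$. (Under this labeling, Frankl's conjecture says $|\{F\in\mathcal{F}:1\in F\}|\ge\frac12|\mathcal{F}|$.) *)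

theory Defs
  imports Complex_Main
begin

definition union_closed :: "'a set set \<Rightarrow> bool" where
  "union_closed F \<longleftrightarrow> (\<forall>A\<in>F. \<forall>B\<in>F. A \<union> B \<in> F)"

definition occ :: "'a set set \<Rightarrow> 'a \<Rightarrow> nat" where
  "occ F x = card {A \<in> F. x \<in> A}"

text \<open>Frankl's conjecture (ground elements taken from nat; any finite family of finite sets
  can be relabelled into nat).\<close>
definition frankl_conjecture :: bool where
  "frankl_conjecture \<longleftrightarrow>
     (\<forall>F :: nat set set. finite F \<and> (\<forall>A\<in>F. finite A) \<and> union_closed F \<and> F \<noteq> {{}} \<longrightarrow>
        (\<exists>x. 2 * occ F x \<ge> card F))"

definition nagel_conjecture :: bool where
  "nagel_conjecture \<longleftrightarrow>
     (\<forall>(n::nat) (F :: nat set set).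
        F \<subseteq> Pow {1..n} \<and> union_closed F \<and> \<Union>F = {1..n} \<and>
        (\<forall>i j. 1 \<le> i \<and> i \<le> j \<and> j \<le> n \<longrightarrow> occ F j \<le> occ F i) \<longrightarrow>
        (\<forall>k\<in>{1..n}. real (occ F k) \<ge> real (card F) / (2 ^ (k - 1) + 1)))"

end

theory Submission
  imports Defs
begin
lemma sort_bij:
  fixes f :: "'a::linorder \<Rightarrow> nat"
  assumes "finite U"
  shows "\<exists>h. bij_betw h {1..card U} U \<and> (\<forall>i j. 1 \<le> i \<and> i \<le> j \<and> j \<le> card U \<longrightarrow> f (h j) \<le> f (h i))"
proof -
  define zs where "zs = sort_key f (sorted_list_of_set U)"
  define n where "n = card U"
  have len: "length zs = n" unfolding zs_def n_def using assms by simp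
  have dist: "distinct zs" unfolding zs_def using assms by (simp add: distinct_sort)
  have st: "set zs = U" unfolding zs_def using assms by (simp add: set_sort)
  have srt: "sorted (map f zs)" unfolding zs_def by (rule sorted_sort_key)
  define h where "h i = zs ! (n - i)" for i
  have inj: "inj_on h {1..n}"
  proof (rule inj_onI)
    fix i j assume "i \<in> {1..n}" "j \<in> {1..n}" "h i = h j"
    then have "n - i = n - j" unfolding h_def using dist len nth_eq_iff_index_eq[of zs "n-i" "n-j"] by auto
    then show "i = j" using \<open>i \<in> {1..n}\<close> \<open>j \<in> {1..n}\<close> by auto
  qed
  have img: "h ` {1..n} = U"
  proof
    show "h ` {1..n} \<subseteq> U" unfolding h_def using len st by auto
    show "U \<subseteq> h ` {1..n}"
    proof
      fix x assume "x \<in> U"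
      then obtain m where m: "m < n" "zs ! m = x" using st len by (metis in_set_conv_nth)
      then have "h (n - m) = x" unfolding h_def by simp
      moreover have "n - m \<in> {1..n}" using m by auto
      ultimately show "x \<in> h ` {1..n}" by blast
    qed
  qed
  have mono: "f (h j) \<le> f (h i)" if "1 \<le> i" "i \<le> j" "j \<le> n" for i j
  proof -
    have "(map f zs) ! (n - j) \<le> (map f zs) ! (n - i)"
      using sorted_nth_mono[OF srt, of "n-j" "n-i"] len that by simp
    then show ?thesis unfolding h_def using len that by simp
  qed
  show ?thesis using inj img mono unfolding bij_betw_def n_def[symmetric] by blast
qed

lemma card_split_mem:
  assumes "finite S"
  shows "card S = card {B \<in> S. x \<in> B} + card {B \<in> S. x \<notin> B}"
proof -
  have "S = {B \<in> S. x \<in> B} \<union> {B \<in> S. x \<notin> B}" by blast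
  then have "card S = card ({B \<in> S. x \<in> B} \<union> {B \<in> S. x \<notin> B})" by simp
  also have "\<dots> = card {B \<in> S. x \<in> B} + card {B \<in> S. x \<notin> B}"
    by (rule card_Un_disjoint) (use assms in auto)
  finally show ?thesis .
qed

lemma frankl_imp_nagel:
  assumes fr: frankl_conjecture
    and sub: "F \<subseteq> Pow {1..n}" and uc: "union_closed F" and un: "\<Union>F = {1..n}"
    and ord: "\<forall>i j. 1 \<le> i \<and> i \<le> j \<and> j \<le> n \<longrightarrow> occ F j \<le> occ F i"
    and k: "k \<in> {1..n}"
  shows "real (occ F k) \<ge> real (card F) / (2 ^ (k - 1) + 1)"
proof -
  define P where "P = {1..<k}"
  define L where "L = (\<lambda>A. A - P) ` F"
  have finF: "finite F" using sub by (meson finite_Pow_iff finite_atLeastAtMost finite_subset)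
  have finL: "finite L" unfolding L_def using finF by simp
  have memfin: "\<forall>A\<in>L. finite A" unfolding L_def
  proof
    fix X assume "X \<in> (\<lambda>A. A - P) ` F"
    then obtain A where "A \<in> F" "X = A - P" by blast
    then have "X \<subseteq> {1..n}" using sub by blast
    then show "finite X" by (rule finite_subset) simp
  qed
  have ucL: "union_closed L" unfolding union_closed_def L_def
  proof (intro ballI)
    fix X Y assume "X \<in> (\<lambda>A. A - P) ` F" "Y \<in> (\<lambda>A. A - P) ` F"
    then obtain A B where AB: "A \<in> F" "B \<in> F" "X = A - P" "Y = B - P" by blast
    then have "X \<union> Y = (A \<union> B) - P" by blast
    moreover have "A \<union> B \<in> F" using uc AB unfolding union_closed_def by blast
    ultimately show "X \<union> Y \<in> (\<lambda>A. A - P) ` F" by blast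
  qed
  obtain A0 where A0: "A0 \<in> F" "k \<in> A0" using un k by blast
  have kP: "k \<notin> P" unfolding P_def by simp
  have A0L: "A0 - P \<in> L" unfolding L_def using A0 by blast
  have Lne: "L \<noteq> {{}}" using A0L A0 kP by blast
  obtain x where x: "2 * occ L x \<ge> card L"
    using fr finL memfin ucL Lne unfolding frankl_conjecture_def by blast
  have cardL: "card L > 0" using A0L finL by (metis card_gt_0_iff empty_iff)
  then have "occ L x > 0" using x by simp
  then have "{B \<in> L. x \<in> B} \<noteq> {}" unfolding occ_def by (metis card.empty less_irrefl)
  then obtain A1 where A1: "A1 \<in> F" "x \<in> A1 - P" unfolding L_def by blast
  have xn: "x \<in> {1..n}" using A1 sub by blast
  have xP: "x \<notin> P" using A1 by blast
  have xk: "k \<le> x" using xP xn unfolding P_def by auto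
  have occxk: "occ F x \<le> occ F k" using ord xk xn k by auto
  have e1: "{B \<in> L. x \<in> B} = (\<lambda>A. A - P) ` {A \<in> F. x \<in> A}" unfolding L_def using xP by blast
  have occLF: "occ L x \<le> occ F x" unfolding occ_def e1
    by (rule card_image_le) (use finF in simp)
  have finLx: "finite {B \<in> L. x \<notin> B}" using finL by simp
  have splitL: "card L = occ L x + card {B \<in> L. x \<notin> B}" unfolding occ_def
    using card_split_mem[OF finL] .
  have nx: "card {B \<in> L. x \<notin> B} \<le> occ F x" using splitL x occLF by linarith
  have sub2: "{A \<in> F. x \<notin> A} \<subseteq> (\<lambda>(B, T). B \<union> T) ` ({B \<in> L. x \<notin> B} \<times> Pow P)"
  proof
    fix A assume "A \<in> {A \<in> F. x \<notin> A}"
    then have "A - P \<in> {B \<in> L. x \<notin> B}" "A \<inter> P \<in> Pow P" "A = (A - P) \<union> (A \<inter> P)"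
      unfolding L_def by auto
    then have "(A - P, A \<inter> P) \<in> {B \<in> L. x \<notin> B} \<times> Pow P" "A = (\<lambda>(B, T). B \<union> T) (A - P, A \<inter> P)"
      by auto
    then show "A \<in> (\<lambda>(B, T). B \<union> T) ` ({B \<in> L. x \<notin> B} \<times> Pow P)" by (rule rev_image_eqI)
  qed
  have finP: "finite P" unfolding P_def by simp
  have cardP: "card P = k - 1" unfolding P_def by simp
  have "card {A \<in> F. x \<notin> A} \<le> card ((\<lambda>(B, T). B \<union> T) ` ({B \<in> L. x \<notin> B} \<times> Pow P))"
    by (rule card_mono) (use finLx finP sub2 in auto)
  also have "\<dots> \<le> card ({B \<in> L. x \<notin> B} \<times> Pow P)" by (rule card_image_le) (use finLx finP in simp)
  also have "\<dots> = card {B \<in> L. x \<notin> B} * 2 ^ (k - 1)" using finP cardP by (simp add: card_cartesian_product card_Pow)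
  finally have c2: "card {A \<in> F. x \<notin> A} \<le> occ F x * 2 ^ (k - 1)"
    using nx by (meson dual_order.trans mult_le_mono1)
  have splitF: "card F = occ F x + card {A \<in> F. x \<notin> A}" unfolding occ_def
    using card_split_mem[OF finF] .
  have le: "card F \<le> occ F k * (2 ^ (k - 1) + 1)"
  proof -
    have "card F \<le> occ F x * (2 ^ (k - 1) + 1)" using splitF c2 by simp
    also have "\<dots> \<le> occ F k * (2 ^ (k - 1) + 1)" using occxk by (rule mult_right_mono) simp
    finally show ?thesis .
  qed
  have "real (card F) \<le> real (occ F k * (2 ^ (k - 1) + 1))"
    using le by (simp only: of_nat_le_iff)
  then have "real (card F) \<le> real (occ F k) * (2 ^ (k - 1) + 1)" by (simp add: algebra_simps)
  then show ?thesis by (simp add: divide_le_eq add_pos_pos)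
qed

theorem mainTheorem2:
  shows "frankl_conjecture \<longleftrightarrow> nagel_conjecture"
proof
  assume fr: frankl_conjecture
  show nagel_conjecture unfolding nagel_conjecture_def
  proof (intro allI impI ballI)
    fix n :: nat and F :: "nat set set" and k
    assume "F \<subseteq> Pow {1..n} \<and> union_closed F \<and> \<Union>F = {1..n} \<and>
        (\<forall>i j. 1 \<le> i \<and> i \<le> j \<and> j \<le> n \<longrightarrow> occ F j \<le> occ F i)" and "k \<in> {1..n}"
    then show "real (occ F k) \<ge> real (card F) / (2 ^ (k - 1) + 1)"
      using frankl_imp_nagel[OF fr, of F n k] by blast
  qed
next
  assume ng: nagel_conjecture
  show frankl_conjecture unfolding frankl_conjecture_def
  proof (intro allI impI)
    fix F :: "nat set set"
    assume "finite F \<and> (\<forall>A\<in>F. finite A) \<and> union_closed F \<and> F \<noteq> {{}}"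
    then have finF: "finite F" and memfin: "\<forall>A\<in>F. finite A" and uc: "union_closed F"
      and ne1: "F \<noteq> {{}}" by auto
    show "\<exists>x. 2 * occ F x \<ge> card F"
    proof (cases "F = {}")
      case True then show ?thesis by simp
    next
      case Fne: False
      define U where "U = \<Union>F"
      have finU: "finite U" unfolding U_def using finF memfin by blast
      define n where "n = card U"
      obtain h where hb: "bij_betw h {1..n} U"
        and hm: "\<forall>i j. 1 \<le> i \<and> i \<le> j \<and> j \<le> n \<longrightarrow> occ F (h j) \<le> occ F (h i)"
        using sort_bij[OF finU, of "occ F"] unfolding n_def by blast
      define g where "g = inv_into {1..n} h"
      have gb: "bij_betw g U {1..n}" unfolding g_def by (rule bij_betw_inv_into[OF hb])
      have gh: "g (h i) = i" if "i \<in> {1..n}" for i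
        unfolding g_def using hb that by (simp add: bij_betw_def inv_into_f_f)
      have ginj: "inj_on g U" using gb by (simp add: bij_betw_def)
      have FsubU: "F \<subseteq> Pow U" unfolding U_def by blast
      have injF: "inj_on (image g) F"
        using inj_on_image_Pow[OF ginj] FsubU by (rule inj_on_subset)
      define G where "G = image g ` F"
      have cardG: "card G = card F" unfolding G_def using injF by (simp add: card_image)
      have occG: "occ G (g y) = occ F y" if "y \<in> U" for y
      proof -
        have "{B \<in> G. g y \<in> B} = image g ` {A \<in> F. y \<in> A}"
        proof (intro equalityI subsetI)
          fix B assume "B \<in> {B \<in> G. g y \<in> B}"
          then obtain A where A: "A \<in> F" "B = g ` A" "g y \<in> g ` A" unfolding G_def by blast
          have "A \<subseteq> U" using A(1) FsubU by blast
          then have "y \<in> A" using inj_on_image_mem_iff[OF ginj that] A(3) by blast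
          then show "B \<in> image g ` {A \<in> F. y \<in> A}" using A by blast
        next
          fix B assume "B \<in> image g ` {A \<in> F. y \<in> A}"
          then show "B \<in> {B \<in> G. g y \<in> B}" unfolding G_def by blast
        qed
        then show ?thesis unfolding occ_def
          using inj_on_subset[OF injF, of "{A \<in> F. y \<in> A}"] by (simp add: card_image)
      qed
      have Gsub: "G \<subseteq> Pow {1..n}" unfolding G_def
        using FsubU bij_betw_imp_surj_on[OF gb] by blast
      have ucG: "union_closed G" unfolding union_closed_def G_def
      proof (intro ballI)
        fix X Y assume "X \<in> image g ` F" "Y \<in> image g ` F"
        then obtain A B where AB: "A \<in> F" "B \<in> F" "X = g ` A" "Y = g ` B" by blast
        then have "X \<union> Y = g ` (A \<union> B)" by (simp add: image_Un)
        moreover have "A \<union> B \<in> F" using uc AB unfolding union_closed_def by blast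
        ultimately show "X \<union> Y \<in> image g ` F" by blast
      qed
      have unG: "\<Union>G = {1..n}"
      proof -
        have "\<Union>G = g ` U" unfolding G_def U_def by blast
        then show ?thesis using gb by (simp add: bij_betw_def)
      qed
      have Une: "U \<noteq> {}"
      proof
        assume "U = {}"
        then have "F \<subseteq> {{}}" unfolding U_def by blast
        then show False using Fne ne1 by blast
      qed
      then have n1: "1 \<in> {1..n}" unfolding n_def using finU by (simp add: Suc_leI card_gt_0_iff)
      have ordG: "\<forall>i j. 1 \<le> i \<and> i \<le> j \<and> j \<le> n \<longrightarrow> occ G j \<le> occ G i"
      proof (intro allI impI)
        fix i j assume ij: "1 \<le> i \<and> i \<le> j \<and> j \<le> n"
        have hi: "h i \<in> U" "h j \<in> U" using bij_betw_apply[OF hb] ij by auto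
        have "occ G i = occ F (h i)" using occG[OF hi(1)] gh ij by simp
        moreover have "occ G j = occ F (h j)" using occG[OF hi(2)] gh ij by simp
        ultimately show "occ G j \<le> occ G i" using hm ij by simp
      qed
      have "real (occ G 1) \<ge> real (card G) / (2 ^ (1 - 1) + 1)"
        using ng Gsub ucG unG ordG n1 unfolding nagel_conjecture_def by blast
      then have "real (card G) \<le> 2 * real (occ G 1)" by simp
      then have "card F \<le> 2 * occ G 1" using cardG by linarith
      moreover have "occ G 1 = occ F (h 1)"
        using occG[OF bij_betw_apply[OF hb n1]] gh[OF n1] by simp
      ultimately show ?thesis by auto
    qed
  qed
qed

end
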